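(* Let $\mathcal F$ be the set of ordered pairs of reduced fractions $\left(\frac ab,\frac cd\right)$ (with $a,c\ge 0$, $b,d\ge1$ integers) such that $0\le \frac ab<\frac cd\le 1$ and $ad-bc=-1$, and let $\mathcal F^*=\{(\frac01,\frac1n): n\in\mathbb N\}$. Then \[ \sum_{\left(\frac ab,\frac cd\right)\in\mathcal F\setminus\mathcal F^*}\frac{ab+cd+(a+c)(b+d)}{\big(abcd(a+c)(b+d)\big)^2}=7-12\gamma, \] where $\gamma$ is the Euler–Mascheroni constant.
   Context: $\mathcal F$ is the set of pairs of consecutive Farey fractions in $[0,1]$. *)

theory Defs
  imports "HOL-Analysis.Analysis"
begin

definition farey_pairs :: "((int \<times> int) \<times> (int \<times> int)) set" where
  "farey_pairs = {((a, b), (c, d)). a \<ge> 0 \<and> c \<ge> 0 \<and> b \<ge> 1 \<and> d \<ge> 1 \<and>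
      coprime a b \<and> coprime c d \<and>
      0 \<le> real_of_int a / real_of_int b \<and>
      real_of_int a / real_of_int b < real_of_int c / real_of_int d \<and>
      real_of_int c / real_of_int d \<le> 1 \<and>
      a * d - b * c = -1}"

definition farey_pairs_star :: "((int \<times> int) \<times> (int \<times> int)) set" where
  "farey_pairs_star = {((0, 1), (1, int n)) | n :: nat. n \<ge> 1}"

definition farey_term :: "((int \<times> int) \<times> (int \<times> int)) \<Rightarrow> real" where
  "farey_term p = (case p of ((a, b), (c, d)) \<Rightarrow>
     real_of_int (a * b + c * d + (a + c) * (b + d)) /
     (real_of_int (a * b * c * d * (a + c) * (b + d)))\<^sup>2)"

end

theory Submission
  imports Defs
begin

definition Rr :: "real \<Rightarrow> real" where
  "Rr r = r^2 - 1/r^2 - 8*(r - 1/r)"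

definition Hh :: "real \<Rightarrow> real" where
  "Hh r = Rr r + 12 * ln r"

lemma Rr_id:
  fixes x m y :: real
  assumes "x > 0" "m > 0" "y > 0"
  shows "Rr (y/x) - Rr (m/x) - Rr (y/m) =
    (y-x)*(m-x)*(y-m)*(x*(y-m)^2+y*(m-x)^2+m*(y-x)^2)/(x*y*m)^2"
  using assms unfolding Rr_def by (simp add: field_simps power2_eq_square)

lemma Hh_deriv:
  assumes "r > 0"
  shows "(Hh has_real_derivative 2*(r-1)^4/r^3) (at r)"
proof -
  have "(Hh has_real_derivative 2*r - (-(2*r)/(r^2)^2) - 8*(1 - (-1/r^2)) + 12*(1/r)) (at r)"
    unfolding Hh_def Rr_def using assms
    by (auto intro!: derivative_eq_intros simp: power2_eq_square)
  moreover have "2*r - (-(2*r)/(r^2)^2) - 8*(1 - (-1/r^2)) + 12*(1/r) = 2*(r-1)^4/r^3"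
  proof -
    have e: "(r-1)^4 = r^4 - 4*r^3 + 6*r^2 - 4*r + 1"
      by (simp add: power4_eq_xxxx power3_eq_cube power2_eq_square algebra_simps)
    show ?thesis unfolding e using assms
      by (simp add: field_simps power4_eq_xxxx power3_eq_cube power2_eq_square)
  qed
  ultimately show ?thesis by simp
qed

lemma Hh_1: "Hh 1 = 0" by (simp add: Hh_def Rr_def)

lemma Hh_nonneg:
  assumes "r \<ge> 1" shows "Hh r \<ge> 0"
proof -
  have "Hh 1 \<le> Hh r"
  proof (rule DERIV_nonneg_imp_nondecreasing[OF assms])
    fix x :: real assume "1 \<le> x" 
    then show "\<exists>y. (Hh has_real_derivative y) (at x) \<and> 0 \<le> y"
      using Hh_deriv[of x] by (intro exI[of _ "2*(x-1)^4/x^3"]) simp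
  qed
  then show ?thesis by (simp add: Hh_1)
qed

lemma Hh_upper:
  assumes "r \<ge> 1" shows "Hh r \<le> (r-1)^5"
proof -
  define G where "G r = (r-1)^5 - Hh r" for r
  have "G 1 \<le> G r"
  proof (rule DERIV_nonneg_imp_nondecreasing[OF assms])
    fix x :: real assume x: "1 \<le> x"
    have "(G has_real_derivative 5*(x-1)^4 - 2*(x-1)^4/x^3) (at x)"
      unfolding G_def using x
      by (auto intro!: derivative_eq_intros Hh_deriv)
    moreover have "5*(x-1)^4 - 2*(x-1)^4/x^3 \<ge> 0"
    proof -
      have x3: "x^3 \<ge> 1" using x by simp
      have p: "(x-1)^4 \<ge> 0" by simp
      have "2*(x-1)^4/x^3 \<le> 2*(x-1)^4/1"
        by (rule divide_left_mono) (use p x3 x in auto)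
      thus ?thesis using p by linarith
    qed
    ultimately show "\<exists>y. (G has_real_derivative y) (at x) \<and> 0 \<le> y" by blast
  qed
  then show ?thesis by (simp add: G_def Hh_1)
qed

type_synonym fp = "(int \<times> int) \<times> (int \<times> int)"

definition GG :: "fp set" where
  "GG = {((a,b),(c,d)). 1 \<le> a \<and> 1 \<le> c \<and> a < b \<and> c \<le> d \<and> b*c - a*d = 1}"

lemma GG_iff: "((a,b),(c,d)) \<in> GG \<longleftrightarrow> 1 \<le> a \<and> 1 \<le> c \<and> a < b \<and> c \<le> d \<and> b*c - a*d = 1"
  by (simp add: GG_def)

lemma frac_less_iff:
  fixes a b c d :: int
  assumes "b > 0" "d > 0"
  shows "real_of_int a / real_of_int b < real_of_int c / real_of_int d \<longleftrightarrow> a*d < c*b"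
proof -
  have "real_of_int a / real_of_int b < real_of_int c / real_of_int d \<longleftrightarrow>
        real_of_int a * real_of_int d < real_of_int c * real_of_int b"
    using assms by (simp add: field_simps)
  also have "\<dots> \<longleftrightarrow> a*d < c*b" by (metis of_int_less_iff of_int_mult)
  finally show ?thesis .
qed

lemma frac_le1_iff:
  fixes c d :: int
  assumes "d > 0"
  shows "real_of_int c / real_of_int d \<le> 1 \<longleftrightarrow> c \<le> d"
  using assms by (simp add: divide_le_eq)

lemma det_coprime:
  fixes a b c d :: int
  assumes "b*c - a*d = 1"
  shows "coprime a b" "coprime c d"
proof -
  show "coprime a b"
  proof (rule coprimeI)
    fix k assume "k dvd a" "k dvd b"
    hence "k dvd b*c - a*d" by (simp add: dvd_diff)
    thus "is_unit k" using assms by simp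
  qed
  show "coprime c d"
  proof (rule coprimeI)
    fix k assume "k dvd c" "k dvd d"
    hence "k dvd b*c - a*d" by (simp add: dvd_diff)
    thus "is_unit k" using assms by simp
  qed
qed

lemma A_eq: "farey_pairs - farey_pairs_star = GG"
proof (intro set_eqI iffI)
  fix P assume P: "P \<in> farey_pairs - farey_pairs_star"
  obtain a b c d where Pe: "P = ((a,b),(c,d))" by (metis prod.collapse)
  have h: "a \<ge> 0" "c \<ge> 0" "b \<ge> 1" "d \<ge> 1" "coprime a b"
     "real_of_int a / real_of_int b < real_of_int c / real_of_int d"
     "real_of_int c / real_of_int d \<le> 1" "a*d - b*c = -1"
    using P unfolding Pe farey_pairs_def by auto
  have cd: "c \<le> d" using h(7) frac_le1_iff[of d c] h(4) by simp
  have det: "b*c - a*d = 1" using h(8) by (simp add: algebra_simps)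
  have a0: "a \<noteq> 0"
  proof
    assume "a = 0"
    hence "b = 1" using h(5) h(3) by simp
    hence "c = 1" using det \<open>a = 0\<close> by simp
    hence "P \<in> farey_pairs_star" unfolding farey_pairs_star_def Pe
      using \<open>a = 0\<close> \<open>b = 1\<close> h(4) by (auto intro!: exI[of _ "nat d"])
    thus False using P by simp
  qed
  hence a1: "a \<ge> 1" using h(1) by simp
  have c1: "c \<ge> 1"
  proof (rule ccontr)
    assume "\<not> c \<ge> 1" hence "c = 0" using h(2) by simp
    hence "a*d = -1" using det by simp
    moreover have "a*d \<ge> 0" using h(1) h(4) by simp
    ultimately show False by simp
  qed
  have ab: "a < b"
  proof (rule ccontr)
    assume "\<not> a < b" hence "b \<le> a" by simp
    hence "b*d \<le> a*d" using h(4) by (simp add: mult_right_mono)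
    moreover have "b*c \<le> b*d" using cd h(3) by (simp add: mult_left_mono)
    ultimately show False using det by simp
  qed
  show "P \<in> GG" unfolding Pe GG_iff using a1 c1 ab cd det by simp
next
  fix P assume P: "P \<in> GG"
  obtain a b c d where Pe: "P = ((a,b),(c,d))" by (metis prod.collapse)
  have h: "1 \<le> a" "1 \<le> c" "a < b" "c \<le> d" "b*c - a*d = 1" using P unfolding Pe GG_iff by auto
  have "a*d < c*b" using h(5) by (simp add: algebra_simps)
  hence lt: "real_of_int a / real_of_int b < real_of_int c / real_of_int d"
    using frac_less_iff[of b d a c] h by simp
  have le: "real_of_int c / real_of_int d \<le> 1" using frac_le1_iff[of d c] h by simp
  have "P \<in> farey_pairs" unfolding Pe farey_pairs_def
    using h det_coprime[OF h(5)] lt le by (auto simp: algebra_simps)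
  moreover have "P \<notin> farey_pairs_star" unfolding Pe farey_pairs_star_def using h by auto
  ultimately show "P \<in> farey_pairs - farey_pairs_star" by simp
qed

fun Lc :: "fp \<Rightarrow> fp" where "Lc ((a,b),(c,d)) = ((a,b),(a+c,b+d))"
fun Rc :: "fp \<Rightarrow> fp" where "Rc ((a,b),(c,d)) = ((a+c,b+d),(c,d))"
fun den :: "fp \<Rightarrow> int" where "den ((a,b),(c,d)) = b+d"
fun mx :: "fp \<Rightarrow> int" where "mx ((a,b),(c,d)) = max b d"
definition rootp :: "nat \<Rightarrow> fp" where "rootp n = ((1, int n + 1),(1, int n))"

definition SS :: "nat \<Rightarrow> fp set" where "SS N = {P \<in> GG. den P \<le> int N}"
definition MM :: "nat \<Rightarrow> fp set" where "MM N = {P \<in> GG. mx P \<le> int N}"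

lemma MM_finite: "finite (MM N)"
proof -
  have "MM N \<subseteq> ({0..int N} \<times> {0..int N}) \<times> ({0..int N} \<times> {0..int N})"
    unfolding MM_def GG_def by auto
  thus ?thesis by (rule finite_subset) auto
qed

lemma SS_sub_MM: "SS N \<subseteq> MM N"
  unfolding SS_def MM_def GG_def by auto

lemma SS_finite: "finite (SS N)"
  using MM_finite SS_sub_MM finite_subset by blast

lemma Lc_GG: "P \<in> GG \<Longrightarrow> Lc P \<in> GG"
  by (cases P) (auto simp: GG_def algebra_simps)

lemma Rc_GG: "P \<in> GG \<Longrightarrow> Rc P \<in> GG"
  by (cases P) (auto simp: GG_def algebra_simps)

lemma inj_Lc: "inj Lc"
proof (rule injI)
  fix P Q assume "Lc P = Lc Q" thus "P = Q" by (cases P; cases Q) auto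
qed

lemma inj_Rc: "inj Rc"
proof (rule injI)
  fix P Q assume "Rc P = Rc Q" thus "P = Q" by (cases P; cases Q) auto
qed

lemma inj_root: "inj rootp"
  by (rule injI) (auto simp: rootp_def)

lemma root_GG: "n \<ge> 1 \<Longrightarrow> rootp n \<in> GG"
  by (auto simp: rootp_def GG_def)

lemma L_preimage:
  fixes a b c d :: int
  assumes "((a,b),(c,d)) \<in> GG" "b < d"
  shows "((a,b),(c-a,d-b)) \<in> GG"
proof -
  have h: "1 \<le> a" "1 \<le> c" "a < b" "c \<le> d" "b*c - a*d = 1" using assms(1) by (auto simp: GG_def)
  have "a*b \<le> a*d" using h(1) assms(2) by (simp add: mult_left_mono)
  hence "b*a < b*c" using h(5) by (simp add: algebra_simps)
  hence ac: "a < c" using h(3) h(1) by (simp add: mult_less_cancel_left_pos)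
  have cd: "c - a \<le> d - b"
  proof (rule ccontr)
    assume "\<not> c - a \<le> d - b" hence e: "c - a \<ge> (d - b) + 1" by simp
    have "b*(c-a) \<ge> b*((d-b)+1)" using e h by (simp add: mult_left_mono)
    moreover have "a*(d-b) < b*(d-b)" using h(3) assms(2) by (simp add: mult_strict_right_mono)
    moreover have "b*(c-a) - a*(d-b) = 1" using h(5) by (simp add: algebra_simps)
    ultimately show False using h by (simp add: algebra_simps)
  qed
  show ?thesis unfolding GG_iff using h ac cd assms(2) by (simp add: algebra_simps)
qed

lemma R_preimage:
  fixes a b c d :: int
  assumes "((a,b),(c,d)) \<in> GG" "d < b"
  shows "((a,b),(c,d)) = rootp (nat d) \<or> ((a-c,b-d),(c,d)) \<in> GG"
proof -
  have h: "1 \<le> a" "1 \<le> c" "a < b" "c \<le> d" "b*c - a*d = 1" using assms(1) by (auto simp: GG_def)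
  have "(d+1)*c \<le> b*c" using h(2) assms(2) by (simp add: mult_right_mono)
  hence e1: "c*d + c \<le> b*c" by (simp add: algebra_simps)
  have e2: "c*d \<le> a*d" using e1 h(2) h(5) by linarith
  have "d > 0" using h by linarith
  hence ca: "c \<le> a" using e2 by (simp add: mult_le_cancel_right_pos)
  show ?thesis
  proof (cases "a = c")
    case True
    hence e: "c*(b-d) = 1" using h(5) by (simp add: algebra_simps)
    have "c*1 \<le> c*(b-d)" using assms(2) h(2) by (simp add: mult_left_mono)
    hence "c = 1" using e h(2) by simp
    hence "b - d = 1" using e by simp
    hence "((a,b),(c,d)) = rootp (nat d)" using True \<open>c = 1\<close> h by (simp add: rootp_def)
    thus ?thesis by simp
  next
    case False
    hence ac: "c < a" using ca by simp
    have lt: "a - c < b - d"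
    proof (rule ccontr)
      assume "\<not> a - c < b - d" hence e: "a - c \<ge> b - d" by simp
      have "(a-c)*d \<ge> (b-d)*d" using e h by (simp add: mult_right_mono)
      moreover have "(b-d)*(c-d) \<le> 0" using h(4) assms(2) by (simp add: mult_nonneg_nonpos)
      moreover have "(b-d)*c - (a-c)*d = 1" using h(5) by (simp add: algebra_simps)
      ultimately show False by (simp add: algebra_simps)
    qed
    show ?thesis unfolding GG_iff using h ac lt by (simp add: algebra_simps)
  qed
qed

lemma GG_b_ne_d:
  assumes "((a,b),(c,d)) \<in> GG" shows "b \<noteq> d"
proof
  assume bd: "b = d"
  have h: "1 \<le> a" "1 \<le> c" "a < b" "c \<le> d" "b*c - a*d = 1" using assms(1) by (auto simp: GG_def)
  hence e: "b*(c-a) = 1" using bd by (simp add: algebra_simps)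
  show False
  proof (cases "c - a \<ge> 1")
    case True
    hence "b*1 \<le> b*(c-a)" using h by (simp add: mult_left_mono)
    thus False using e h by simp
  next
    case False
    hence "b*(c-a) \<le> 0" using h by (simp add: mult_nonneg_nonpos)
    thus False using e by simp
  qed
qed

lemma MM_decomp:
  assumes "N \<ge> 1"
  shows "MM N = rootp ` {1..<N} \<union> Lc ` SS N \<union> Rc ` SS N"
proof (intro set_eqI iffI)
  fix Q assume Q: "Q \<in> MM N"
  obtain a b c d where Qe: "Q = ((a,b),(c,d))" by (metis prod.collapse)
  have QG: "((a,b),(c,d)) \<in> GG" and mxN: "max b d \<le> int N" using Q unfolding Qe MM_def by auto
  have h: "1 \<le> a" "1 \<le> c" "a < b" "c \<le> d" "b*c - a*d = 1" using QG by (auto simp: GG_def)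
  consider "b < d" | "d < b" using GG_b_ne_d[OF QG] by linarith
  then show "Q \<in> rootp ` {1..<N} \<union> Lc ` SS N \<union> Rc ` SS N"
  proof cases
    case 1
    have P: "((a,b),(c-a,d-b)) \<in> SS N" using L_preimage[OF QG 1] mxN unfolding SS_def by auto
    have "Q = Lc ((a,b),(c-a,d-b))" unfolding Qe by simp
    thus ?thesis using P by blast
  next
    case 2
    from R_preimage[OF QG 2] show ?thesis
    proof
      assume r: "((a,b),(c,d)) = rootp (nat d)"
      have "nat d \<in> {1..<N}" using h mxN 2 by auto
      thus ?thesis using r Qe by blast
    next
      assume PG: "((a-c,b-d),(c,d)) \<in> GG"
      have P: "((a-c,b-d),(c,d)) \<in> SS N" using PG mxN 2 unfolding SS_def by auto
      have "Q = Rc ((a-c,b-d),(c,d))" unfolding Qe by simp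
      thus ?thesis using P by blast
    qed
  qed
next
  fix Q assume "Q \<in> rootp ` {1..<N} \<union> Lc ` SS N \<union> Rc ` SS N"
  then consider (r) n where "n \<in> {1..<N}" "Q = rootp n" | (l) P where "P \<in> SS N" "Q = Lc P"
    | (rr) P where "P \<in> SS N" "Q = Rc P" by blast
  then show "Q \<in> MM N"
  proof cases
    case r thus ?thesis using root_GG[of n] by (auto simp: MM_def rootp_def)
  next
    case l
    obtain a b c d where Pe: "P = ((a,b),(c,d))" by (metis prod.collapse)
    show ?thesis using l Lc_GG[of P] unfolding MM_def SS_def Pe by (auto simp: GG_def)
  next
    case rr
    obtain a b c d where Pe: "P = ((a,b),(c,d))" by (metis prod.collapse)
    show ?thesis using rr Rc_GG[of P] unfolding MM_def SS_def Pe by (auto simp: GG_def)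
  qed
qed

lemma decomp_disj:
  "rootp ` {1..<N} \<inter> Lc ` SS N = {}"
  "rootp ` {1..<N} \<inter> Rc ` SS N = {}"
  "Lc ` SS N \<inter> Rc ` SS N = {}"
proof -
  show "rootp ` {1..<N} \<inter> Lc ` SS N = {}"
  proof (rule ccontr)
    assume "rootp ` {1..<N} \<inter> Lc ` SS N \<noteq> {}"
    then obtain n P where "P \<in> SS N" "rootp n = Lc P" by blast
    thus False by (cases P) (auto simp: rootp_def SS_def GG_def)
  qed
  show "rootp ` {1..<N} \<inter> Rc ` SS N = {}"
  proof (rule ccontr)
    assume "rootp ` {1..<N} \<inter> Rc ` SS N \<noteq> {}"
    then obtain n P where "P \<in> SS N" "rootp n = Rc P" by blast
    thus False by (cases P) (auto simp: rootp_def SS_def GG_def)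
  qed
  show "Lc ` SS N \<inter> Rc ` SS N = {}"
  proof (rule ccontr)
    assume "Lc ` SS N \<inter> Rc ` SS N \<noteq> {}"
    then obtain P P' where "P \<in> SS N" "P' \<in> SS N" "Lc P = Rc P'" by blast
    thus False by (cases P; cases P') (auto simp: SS_def GG_def)
  qed
qed

definition hp :: "fp \<Rightarrow> real" where
  "hp P = (case P of ((a,b),(c,d)) \<Rightarrow>
     Hh ((real_of_int c / real_of_int d) / (real_of_int a / real_of_int b)))"

lemma aux_div:
  fixes E K N :: real
  assumes "E > 0" "K > 0"
  shows "(1/E^2)*(N/E^2)/(K/E^2) = N/(K*E^2)"
  using assms by (simp add: field_simps power2_eq_square)

lemma tele:
  assumes "P \<in> GG"
  shows "farey_term P = hp P - hp (Lc P) - hp (Rc P)"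
proof -
  obtain a b c d where Pe: "P = ((a,b),(c,d))" by (metis prod.collapse)
  have h: "1 \<le> a" "1 \<le> c" "a < b" "c \<le> d" "b*c - a*d = 1" using assms unfolding Pe GG_iff by auto
  define A where "A = real_of_int a"
  define B where "B = real_of_int b"
  define C where "C = real_of_int c"
  define D where "D = real_of_int d"
  have pos: "A > 0" "B > 0" "C > 0" "D > 0" using h by (auto simp: A_def B_def C_def D_def)
  have det: "B*C - A*D = 1"
  proof -
    have "real_of_int (b*c - a*d) = 1" using h(5) by simp
    thus ?thesis by (simp add: A_def B_def C_def D_def)
  qed
  define x where "x = A/B"
  define y where "y = C/D"
  define m where "m = (A+C)/(B+D)"
  have xp: "x > 0" "y > 0" "m > 0" using pos by (auto simp: x_def y_def m_def)
  have hpP: "hp P = Hh (y/x)" by (simp add: hp_def Pe x_def y_def A_def B_def C_def D_def)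
  have hpL: "hp (Lc P) = Hh (m/x)" by (simp add: hp_def Pe x_def m_def A_def B_def C_def D_def)
  have hpR: "hp (Rc P) = Hh (y/m)" by (simp add: hp_def Pe y_def m_def A_def B_def C_def D_def)
  have lnid: "ln (y/x) = ln (m/x) + ln (y/m)"
  proof -
    show ?thesis using xp by (simp add: ln_divide_pos)
  qed
  have "hp P - hp (Lc P) - hp (Rc P) = Rr (y/x) - Rr (m/x) - Rr (y/m)"
    unfolding hpP hpL hpR Hh_def lnid by simp
  also have "\<dots> = (y-x)*(m-x)*(y-m)*(x*(y-m)^2+y*(m-x)^2+m*(y-x)^2)/(x*y*m)^2"
    by (rule Rr_id[OF xp(1) xp(3) xp(2)])
  also have "\<dots> = farey_term P"
  proof -
    have d1: "y - x = 1/(B*D)"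
    proof -
      have "y - x = (B*C - A*D)/(B*D)" using pos by (simp add: x_def y_def field_simps)
      thus ?thesis using det by simp
    qed
    have d2: "m - x = 1/(B*(B+D))"
    proof -
      have "m - x = (B*C - A*D)/(B*(B+D))" using pos by (simp add: x_def m_def field_simps)
      thus ?thesis using det by simp
    qed
    have d3: "y - m = 1/(D*(B+D))"
    proof -
      have "y - m = (B*C - A*D)/(D*(B+D))" using pos by (simp add: y_def m_def field_simps)
      thus ?thesis using det by simp
    qed
    define S where "S = B + D"
    have Sp: "S > 0" using pos by (simp add: S_def)
    have d2': "m - x = 1/(B*S)" using d2 by (simp add: S_def)
    have d3': "y - m = 1/(D*S)" using d3 by (simp add: S_def)
    have mS: "m = (A+C)/S" by (simp add: m_def S_def)
    have ft: "farey_term P = (A*B + C*D + (A+C)*S) / (A*B*C*D*(A+C)*S)^2"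
      by (simp add: farey_term_def Pe A_def B_def C_def D_def S_def)
    define E where "E = B*D*S"
    have Ep: "E > 0" using pos Sp by (simp add: E_def)
    have s1: "(y-x)*(m-x)*(y-m) = 1/E^2"
      unfolding d1 d2' d3' E_def using pos Sp by (simp add: field_simps power2_eq_square)
    have t1: "x*(y-m)^2 = A*B/E^2"
      unfolding d3' unfolding E_def x_def using pos Sp by (simp add: field_simps power2_eq_square)
    have t2: "y*(m-x)^2 = C*D/E^2"
      unfolding d2' unfolding E_def y_def using pos Sp by (simp add: field_simps power2_eq_square)
    have t3: "m*(y-x)^2 = (A+C)*S/E^2"
      unfolding d1 unfolding E_def mS using pos Sp by (simp add: field_simps power2_eq_square)
    have s2: "x*(y-m)^2+y*(m-x)^2+m*(y-x)^2 = (A*B + C*D + (A+C)*S)/E^2"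
      unfolding t1 t2 t3 by (simp add: add_divide_distrib)
    have s3: "(x*y*m)^2 = (A*C*(A+C))^2/E^2"
      unfolding E_def x_def y_def mS using pos Sp by (simp add: field_simps power2_eq_square)
    have s4: "(A*B*C*D*(A+C)*S)^2 = (A*C*(A+C))^2 * E^2"
      unfolding E_def by (simp add: algebra_simps power2_eq_square)
    have "(y-x)*(m-x)*(y-m)*(x*(y-m)^2+y*(m-x)^2+m*(y-x)^2)/(x*y*m)^2
        = (1/E^2) * ((A*B + C*D + (A+C)*S)/E^2) / ((A*C*(A+C))^2/E^2)"
      unfolding s1 s2 s3 by simp
    also have "\<dots> = (A*B + C*D + (A+C)*S) / ((A*C*(A+C))^2 * E^2)"
      by (rule aux_div[OF Ep]) (use pos in simp)
    finally show ?thesis unfolding ft s4 .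
  qed
  finally show ?thesis by simp
qed

lemma farey_term_nonneg: "P \<in> GG \<Longrightarrow> farey_term P \<ge> 0"
proof -
  assume "P \<in> GG"
  then obtain a b c d where Pe: "P = ((a,b),(c,d))" and h: "1 \<le> a" "1 \<le> c" "a < b" "c \<le> d"
    by (metis GG_iff prod.collapse)
  have "a*b + c*d + (a+c)*(b+d) \<ge> 0" using h by simp
  hence "real_of_int (a*b + c*d + (a+c)*(b+d)) \<ge> 0" by linarith
  thus ?thesis unfolding Pe farey_term_def by simp
qed

lemma hp_bounds:
  assumes "Q \<in> MM N - SS N" "N \<ge> 1"
  shows "0 \<le> hp Q \<and> hp Q \<le> (2 / real N)^5"
proof -
  obtain a b c d where Qe: "Q = ((a,b),(c,d))" by (metis prod.collapse)
  have QG: "((a,b),(c,d)) \<in> GG" and bd: "b + d > int N" using assms unfolding Qe MM_def SS_def by auto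
  have h: "1 \<le> a" "1 \<le> c" "a < b" "c \<le> d" "b*c - a*d = 1" using QG by (auto simp: GG_def)
  have "b*1 \<le> b*c" using h by (simp add: mult_left_mono)
  hence "b \<le> b*c" by simp
  hence i1: "a*d \<ge> b - 1" using h by linarith
  have "1*d \<le> a*d" using h by (simp add: mult_right_mono)
  hence i2: "2*(a*d) \<ge> int N" using i1 bd by simp
  define A where "A = real_of_int a"
  define B where "B = real_of_int b"
  define C where "C = real_of_int c"
  define D where "D = real_of_int d"
  have pos: "A > 0" "B > 0" "C > 0" "D > 0" using h by (auto simp: A_def B_def C_def D_def)
  have det: "B*C = A*D + 1"
  proof -
    have "real_of_int (b*c) = real_of_int (a*d + 1)" using h(5) by (simp add: algebra_simps)
    thus ?thesis by (simp add: A_def B_def C_def D_def)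
  qed
  have ad: "2*(A*D) \<ge> real N"
  proof -
    have "real_of_int (2*(a*d)) \<ge> real_of_int (int N)" using i2 by linarith
    thus ?thesis by (simp add: A_def D_def)
  qed
  define r where "r = (C/D)/(A/B)"
  have hq: "hp Q = Hh r" by (simp add: hp_def Qe r_def A_def B_def C_def D_def)
  have r1: "r - 1 = 1/(A*D)"
  proof -
    have "r = (B*C)/(A*D)" using pos by (simp add: r_def field_simps)
    thus ?thesis using det pos by (simp add: field_simps)
  qed
  have "1/(A*D) > 0" using pos by simp
  hence rge: "r \<ge> 1" using r1 by linarith
  have "1/(A*D) \<le> 2/real N"
    using ad pos assms(2) by (simp add: field_simps)
  hence "(r-1)^5 \<le> (2/real N)^5" using r1 rge by (intro power_mono) linarith+
  thus ?thesis using Hh_nonneg[OF rge] Hh_upper[OF rge] hq by simp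
qed

lemma card_MM: "card (MM N) \<le> N^2"
proof -
  define f :: "fp \<Rightarrow> int \<times> int" where "f Q = (snd (fst Q), snd (snd Q))" for Q
  have inj: "inj_on f (MM N)"
  proof (rule inj_onI)
    fix Q Q' assume Q: "Q \<in> MM N" and Q': "Q' \<in> MM N" and fe: "f Q = f Q'"
    obtain a b c d where Qe: "Q = ((a,b),(c,d))" by (metis prod.collapse)
    obtain a' b' c' d' where Qe': "Q' = ((a',b'),(c',d'))" by (metis prod.collapse)
    have bb: "b' = b" "d' = d" using fe by (auto simp: f_def Qe Qe')
    have h: "1 \<le> a" "1 \<le> c" "a < b" "c \<le> d" "b*c - a*d = 1" using Q by (auto simp: MM_def GG_def Qe)
    have h': "1 \<le> a'" "1 \<le> c'" "a' < b" "c' \<le> d" "b*c' - a'*d = 1" using Q' by (auto simp: MM_def GG_def Qe' bb)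
    have cop: "coprime b d"
    proof (rule coprimeI)
      fix k assume "k dvd b" "k dvd d"
      hence "k dvd b*c - a*d" by (simp add: dvd_diff)
      thus "is_unit k" using h by simp
    qed
    have e: "b*(c-c') = d*(a-a')" using h(5) h'(5) by (simp add: algebra_simps)
    have "b dvd d*(a-a')" unfolding e[symmetric] by simp
    hence dv: "b dvd (a-a')" using cop by (simp add: coprime_dvd_mult_right_iff mult.commute)
    have aa: "a = a'"
    proof (rule ccontr)
      assume "a \<noteq> a'"
      hence "\<bar>b\<bar> \<le> \<bar>a-a'\<bar>" using dv dvd_imp_le_int by simp
      thus False using h h' by simp
    qed
    hence "b*(c-c') = 0" using e by simp
    hence "c = c'" using h by simp
    thus "Q = Q'" using aa bb Qe Qe' by simp
  qed
  have sub: "f ` MM N \<subseteq> {1..int N} \<times> {1..int N}"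
    by (auto simp: f_def MM_def GG_def)
  have "card (MM N) = card (f ` MM N)" using inj by (simp add: card_image)
  also have "\<dots> \<le> card ({1..int N} \<times> {1..int N})" by (rule card_mono[OF _ sub]) auto
  also have "\<dots> = N^2" by (simp add: card_cartesian_product power2_eq_square)
  finally show ?thesis .
qed

lemma rem_bound:
  assumes "N \<ge> 1"
  shows "0 \<le> sum hp (MM N - SS N) \<and> sum hp (MM N - SS N) \<le> 32 / real N ^ 3"
proof -
  have fin: "finite (MM N - SS N)" using MM_finite by simp
  have "sum hp (MM N - SS N) \<le> sum (\<lambda>_. (2/real N)^5) (MM N - SS N)"
    by (rule sum_mono) (use hp_bounds assms in blast)
  also have "\<dots> = real (card (MM N - SS N)) * (2/real N)^5" by simp
  also have "\<dots> \<le> real (N^2) * (2/real N)^5"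
  proof (rule mult_right_mono)
    have "card (MM N - SS N) \<le> card (MM N)" by (rule card_mono[OF MM_finite]) auto
    thus "real (card (MM N - SS N)) \<le> real (N^2)" using card_MM[of N] by linarith
  qed simp
  also have "\<dots> = 32 / real N ^ 3" using assms by (simp add: field_simps power_def)
  finally have "sum hp (MM N - SS N) \<le> 32 / real N ^ 3" .
  moreover have "0 \<le> sum hp (MM N - SS N)"
    by (rule sum_nonneg) (use hp_bounds assms in blast)
  ultimately show ?thesis by simp
qed

lemma tele_sum:
  assumes "N \<ge> 1"
  shows "sum farey_term (SS N) = sum (\<lambda>n. hp (rootp n)) {1..<N} - sum hp (MM N - SS N)"
proof -
  have SG: "SS N \<subseteq> GG" by (auto simp: SS_def)
  have "sum farey_term (SS N) = sum (\<lambda>P. hp P - hp (Lc P) - hp (Rc P)) (SS N)"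
    by (rule sum.cong) (use tele SG in auto)
  also have "\<dots> = sum hp (SS N) - sum (hp \<circ> Lc) (SS N) - sum (hp \<circ> Rc) (SS N)"
    by (simp add: sum_subtractf)
  also have "sum (hp \<circ> Lc) (SS N) = sum hp (Lc ` SS N)"
    by (rule sum.reindex[symmetric]) (meson inj_Lc inj_on_subset subset_UNIV)
  also have "sum (hp \<circ> Rc) (SS N) = sum hp (Rc ` SS N)"
    by (rule sum.reindex[symmetric]) (meson inj_Rc inj_on_subset subset_UNIV)
  finally have e1: "sum farey_term (SS N) = sum hp (SS N) - sum hp (Lc ` SS N) - sum hp (Rc ` SS N)" .
  have fr: "finite (rootp ` {1..<N})" by simp
  have fl: "finite (Lc ` SS N)" using SS_finite by simp
  have frr: "finite (Rc ` SS N)" using SS_finite by simp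
  have "sum hp (MM N) = sum hp (rootp ` {1..<N} \<union> Lc ` SS N \<union> Rc ` SS N)"
    using MM_decomp[OF assms] by simp
  also have "\<dots> = sum hp (rootp ` {1..<N} \<union> Lc ` SS N) + sum hp (Rc ` SS N)"
  proof (rule sum.union_disjoint)
    show "finite (rootp ` {1..<N} \<union> Lc ` SS N)" using fr fl by simp
    show "(rootp ` {1..<N} \<union> Lc ` SS N) \<inter> Rc ` SS N = {}" using decomp_disj[of N] by blast
  qed (use frr in simp)
  also have "sum hp (rootp ` {1..<N} \<union> Lc ` SS N) = sum hp (rootp ` {1..<N}) + sum hp (Lc ` SS N)"
    by (rule sum.union_disjoint) (use fr fl decomp_disj[of N] in simp_all)
  also have "sum hp (rootp ` {1..<N}) = sum (hp \<circ> rootp) {1..<N}"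
    by (rule sum.reindex) (meson inj_root inj_on_subset subset_UNIV)
  finally have e2: "sum hp (MM N) = sum (hp \<circ> rootp) {1..<N} + sum hp (Lc ` SS N) + sum hp (Rc ` SS N)" .
  have e3: "sum hp (MM N - SS N) = sum hp (MM N) - sum hp (SS N)"
    by (rule sum_diff[OF MM_finite SS_sub_MM])
  show ?thesis using e1 e2 e3 by simp
qed

lemma hp_root_Hh: "n \<ge> 1 \<Longrightarrow> hp (rootp n) = Hh ((real n + 1) / real n)"
  by (simp add: hp_def rootp_def field_simps)

lemma hp_root_nonneg: "n \<ge> 1 \<Longrightarrow> hp (rootp n) \<ge> 0"
  using hp_root_Hh Hh_nonneg by (simp add: field_simps)

lemma hp_root_formula:
  assumes "n \<ge> 1"
  shows "hp (rootp n) = -12 * (1/real n + ln (real n) - ln (real n + 1))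
          + 6 * (1/real n - 1/(real n + 1)) + ((1/real n)^2 - (1/(real n + 1))^2)"
proof -
  define z where "z = real n"
  have z: "z > 0" using assms by (simp add: z_def)
  have "hp (rootp n) = Hh ((z + 1)/z)" using hp_root_Hh[OF assms] by (simp add: z_def)
  also have "\<dots> = Rr ((z+1)/z) + 12 * (ln (z+1) - ln z)"
    unfolding Hh_def using z by (simp add: ln_divide_pos)
  also have "Rr ((z+1)/z) = -6*(1/z) - 6*(1/(z+1)) + ((1/z)^2 - (1/(z+1))^2)"
  proof -
    obtain w where w: "w = z + 1" by blast
    have wp: "w > 0" using z w by simp
    have zw: "z = w - 1" using w by simp
    have t1: "(w/z)^2 = 1 + 2*(1/z) + (1/z)^2" unfolding w using z by (simp add: field_simps power2_eq_square)
    have t2: "1/(w/z)^2 = 1 - 2*(1/w) + (1/w)^2" unfolding zw using wp by (simp add: field_simps power2_eq_square)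
    have t3: "w/z = 1 + 1/z" unfolding w using z by (simp add: field_simps)
    have t4: "1/(w/z) = 1 - 1/w" unfolding zw using wp by (simp add: field_simps)
    have "Rr (w/z) = (w/z)^2 - 1/(w/z)^2 - 8*(w/z - 1/(w/z))" by (simp only: Rr_def)
    also have "\<dots> = (1 + 2*(1/z) + (1/z)^2) - (1 - 2*(1/w) + (1/w)^2) - 8*((1 + 1/z) - (1 - 1/w))"
      by (subst t2, subst t4, subst t1, subst t3) (rule refl)
    also have "\<dots> = -6*(1/z) - 6*(1/w) + ((1/z)^2 - (1/w)^2)" by (simp add: algebra_simps)
    finally have "Rr (w/z) = -6*(1/z) - 6*(1/w) + ((1/z)^2 - (1/w)^2)" .
    thus ?thesis using w by simp
  qed
  finally have X: "hp (rootp n) = -6*(1/z) - 6*(1/(z+1)) + ((1/z)^2 - (1/(z+1))^2) + 12 * (ln (z+1) - ln z)" .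
  show ?thesis using X unfolding z_def by (simp add: algebra_simps)
qed

definition Gs :: "nat \<Rightarrow> real" where
  "Gs n = (if n = 0 then 0 else hp (rootp n))"

lemma Gs_nonneg: "Gs n \<ge> 0"
  by (simp add: Gs_def hp_root_nonneg)

lemma Gs_sums: "Gs sums (7 - 12 * euler_mascheroni)"
proof -
  define f where "f k = inverse (real (Suc k))" for k
  have S1: "(\<lambda>k. inverse (real (k+1)) + ln (real (k+1)) - ln (real (k+2))) sums euler_mascheroni"
    by (rule euler_mascheroni_sum_real)
  have fl: "f \<longlonglongrightarrow> 0" unfolding f_def by (rule LIMSEQ_inverse_real_of_nat)
  have S2: "(\<lambda>k. f k - f (Suc k)) sums (f 0 - 0)" by (rule telescope_sums'[OF fl])
  have fl2: "(\<lambda>k. (f k)^2) \<longlonglongrightarrow> 0" using tendsto_power[OF fl, of 2] by simp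
  have S3: "(\<lambda>k. (f k)^2 - (f (Suc k))^2) sums ((f 0)^2 - 0)" by (rule telescope_sums'[OF fl2])
  have S: "(\<lambda>k. -12 * (inverse (real (k+1)) + ln (real (k+1)) - ln (real (k+2)))
        + 6 * (f k - f (Suc k)) + ((f k)^2 - (f (Suc k))^2))
        sums (-12 * euler_mascheroni + 6 * (f 0 - 0) + ((f 0)^2 - 0))"
    by (intro sums_add sums_mult S1 S2 S3)
  have eq: "Gs (Suc k) = -12 * (inverse (real (k+1)) + ln (real (k+1)) - ln (real (k+2)))
        + 6 * (f k - f (Suc k)) + ((f k)^2 - (f (Suc k))^2)" for k
  proof -
    have "Gs (Suc k) = hp (rootp (Suc k))" by (simp add: Gs_def)
    also have "\<dots> = -12 * (1/real (Suc k) + ln (real (Suc k)) - ln (real (Suc k) + 1))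
          + 6 * (1/real (Suc k) - 1/(real (Suc k) + 1)) + ((1/real (Suc k))^2 - (1/(real (Suc k) + 1))^2)"
      by (rule hp_root_formula) simp
    also have "\<dots> = -12 * (inverse (real (k+1)) + ln (real (k+1)) - ln (real (k+2)))
        + 6 * (f k - f (Suc k)) + ((f k)^2 - (f (Suc k))^2)"
      by (simp add: f_def divide_inverse add_ac)
    finally show ?thesis .
  qed
  have "(\<lambda>k. Gs (Suc k)) sums (-12 * euler_mascheroni + 6 * (f 0 - 0) + ((f 0)^2 - 0))"
    using S eq by simp
  hence "(\<lambda>k. Gs (Suc k)) sums (7 - 12 * euler_mascheroni)" by (simp add: f_def)
  thus ?thesis using sums_Suc_iff[of Gs] by (simp add: Gs_def)
qed

lemma Gs_partial: "sum Gs {..<N} = sum (\<lambda>n. hp (rootp n)) {1..<N}"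
proof (induction N)
  case 0 thus ?case by simp
next
  case (Suc N)
  show ?case
  proof (cases "N = 0")
    case True thus ?thesis by (simp add: Gs_def)
  next
    case False
    hence "sum (\<lambda>n. hp (rootp n)) {1..<Suc N} = sum (\<lambda>n. hp (rootp n)) {1..<N} + hp (rootp N)"
      by (simp add: sum.atLeastLessThan_Suc)
    thus ?thesis using Suc False by (simp add: Gs_def)
  qed
qed

theorem theorem13:
  shows "(farey_term has_sum (7 - 12 * (euler_mascheroni :: real)))
           (farey_pairs - farey_pairs_star)"
proof -
  define s where "s = 7 - 12 * (euler_mascheroni :: real)"
  define PN where "PN N = sum Gs {..<N}" for N
  define EN where "EN N = sum hp (MM N - SS N)" for N
  have PNlim: "PN \<longlonglongrightarrow> s" using Gs_sums unfolding sums_def PN_def s_def .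
  have PNle: "PN N \<le> s" for N
  proof -
    have "PN N \<le> suminf Gs" unfolding PN_def
      by (rule sum_le_suminf) (use Gs_sums sums_summable Gs_nonneg in auto)
    thus ?thesis using Gs_sums sums_unique s_def by metis
  qed
  have ENlim: "EN \<longlonglongrightarrow> 0"
  proof (rule tendsto_sandwich[where f="\<lambda>_. 0" and h="\<lambda>N. 32 / real N"])
    show "\<forall>\<^sub>F N in sequentially. 0 \<le> EN N"
      using rem_bound unfolding EN_def eventually_sequentially by (intro exI[of _ 1]) auto
    show "\<forall>\<^sub>F N in sequentially. EN N \<le> 32 / real N"
      unfolding eventually_sequentially
    proof (intro exI[of _ 1] allI impI)
      fix N :: nat assume N: "1 \<le> N"
      have "EN N \<le> 32 / real N ^ 3" using rem_bound[OF N] by (simp add: EN_def)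
      also have "\<dots> \<le> 32 / real N"
      proof (rule divide_left_mono)
        have "real N \<ge> 1" using N by simp
        hence q: "1 \<le> real N ^ 2" by (rule one_le_power)
        have "real N * 1 \<le> real N * real N ^ 2" by (rule mult_left_mono[OF q]) simp
        moreover have "real N ^ 3 = real N * real N ^ 2" by (simp add: power3_eq_cube power2_eq_square)
        ultimately show "real N \<le> real N ^ 3" by simp
      qed (use N in auto)
      finally show "EN N \<le> 32 / real N" .
    qed
    show "(\<lambda>_. 0::real) \<longlonglongrightarrow> 0" by simp
    show "(\<lambda>N. 32 / real N) \<longlonglongrightarrow> 0" by (rule lim_const_over_n)
  qed
  have sumS: "sum farey_term (SS N) = PN N - EN N" if "N \<ge> 1" for N
    using tele_sum[OF that] Gs_partial by (simp add: PN_def EN_def)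
  have Slim: "(\<lambda>N. sum farey_term (SS N)) \<longlonglongrightarrow> s"
  proof -
    have "(\<lambda>N. PN N - EN N) \<longlonglongrightarrow> s - 0" by (intro tendsto_diff PNlim ENlim)
    moreover have "\<forall>\<^sub>F N in sequentially. PN N - EN N = sum farey_term (SS N)"
      unfolding eventually_sequentially using sumS by (intro exI[of _ 1]) auto
    ultimately show ?thesis using Lim_transform_eventually by fastforce
  qed
  have nn: "\<And>P. P \<in> GG \<Longrightarrow> farey_term P \<ge> 0" by (rule farey_term_nonneg)
  have SG: "SS N \<subseteq> GG" for N by (auto simp: SS_def)
  have "(sum farey_term \<longlongrightarrow> s) (finite_subsets_at_top GG)"
  proof (rule order_tendstoI)
    fix a assume a: "a < s"
    from order_tendstoD(1)[OF Slim a] obtain N0 where N0: "\<And>N. N \<ge> N0 \<Longrightarrow> a < sum farey_term (SS N)"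
      unfolding eventually_sequentially by blast
    show "\<forall>\<^sub>F X in finite_subsets_at_top GG. a < sum farey_term X"
      unfolding eventually_finite_subsets_at_top
    proof (intro exI[of _ "SS N0"] conjI allI impI)
      show "finite (SS N0)" by (rule SS_finite)
      show "SS N0 \<subseteq> GG" by (rule SG)
      fix Y assume Y: "finite Y \<and> SS N0 \<subseteq> Y \<and> Y \<subseteq> GG"
      have "sum farey_term (SS N0) \<le> sum farey_term Y"
        by (rule sum_mono2) (use Y nn in auto)
      thus "a < sum farey_term Y" using N0[of N0] by simp
    qed
  next
    fix a assume a: "s < a"
    show "\<forall>\<^sub>F X in finite_subsets_at_top GG. sum farey_term X < a"
    proof (rule eventually_finite_subsets_at_top_weakI)
      fix X assume X: "finite X" "X \<subseteq> GG"
      define B where "B = Max (insert 0 (den ` X))"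
      have Bge: "den P \<le> B" if "P \<in> X" for P
        unfolding B_def using X(1) that by (intro Max_ge) auto
      have B0: "B \<ge> 0" unfolding B_def using X(1) by (intro Max_ge) auto
      define N where "N = nat B + 1"
      have N1: "N \<ge> 1" by (simp add: N_def)
      have XS: "X \<subseteq> SS N" using X(2) Bge B0 unfolding SS_def N_def by force
      have "sum farey_term X \<le> sum farey_term (SS N)"
        by (rule sum_mono2[OF SS_finite XS]) (use SG nn in blast)
      also have "\<dots> = PN N - EN N" by (rule sumS[OF N1])
      also have "\<dots> \<le> PN N" using rem_bound[OF N1] by (simp add: EN_def)
      also have "\<dots> \<le> s" by (rule PNle)
      finally show "sum farey_term X < a" using a by simp
    qed
  qed
  thus ?thesis unfolding A_eq has_sum_def s_def .
qed

end
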